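(* Let $B=(L,R,\omega,\lambda,\rho)$ be a bimachine defining a total function $f:\Sigma^\ast\to\Sigma^\ast$. Then $\sim_L\sqsubseteq\sim_{L_0}$ and $\sim_R\sqsubseteq\sim_{R_0}$.
   Context: A bimachine is $B=(L,R,\omega,\lambda,\rho)$ with $L$ a deterministic left automaton (initial state $l_0$), $R$ a deterministic right automaton reading right to left (initial state $r_0$), $\omega:L\times\Sigma\times R\to\Sigma^\ast$ partial, $\rho:L\to\Sigma^\ast$, $\lambda:R\to\Sigma^\ast$ partial. For $u=\sigma_1\cdots\sigma_n$ with runs $l_0\xrightarrow{\sigma_1}l_1\cdots\xrightarrow{\sigma_n}l_n$ and $r_n\xleftarrow{\sigma_1}r_{n-1}\cdots r_1\xleftarrow{\sigma_n}r_0$, $[\![B]\!](u)=\lambda(r_n)\prod_{i=1}^n\omega(l_{i-1},\sigma_i,r_{n-i})\,\rho(l_n)$ when everything is defined. For a deterministic left (resp. right) automaton $A$ with initial state $q_0$, $u\sim_A v$ iff for every state $p$, $A$ reaches $p$ from $q_0$ reading $u$ (resp. reading $u$ from right to left) iff it does so reading $v$. For equivalences, $\sim_1\sqsubseteq\sim_2$ means $u\sim_1v\Rightarrow u\sim_2 v$. Let $u\wedge v$ be the longest common prefix and $u\vee v$ the longest common suffix of $u,v$; left distance $\lVert u,v\rVert=|u|+|v|-2|u\wedge v|$, right distance $\lVert u,v\rVert_r=|u|+|v|-2|u\vee v|$. $u\sim_{R_0}v$ iff for all $w$, $wu\in\mathrm{dom}(f)\Leftrightarrow wv\in\mathrm{dom}(f)$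 and $\sup_w\lVert f(wu),f(wv)\rVert<\infty$ (over $w$ with $wu\in\mathrm{dom} f$). Symmetrically $u\sim_{L_0}v$ iff for all $w$, $uw\in\mathrm{dom}(f)\Leftrightarrow vw\in\mathrm{dom}(f)$ and $\sup_w\lVert f(uw),f(vw)\rVert_r<\infty$. *)

theory Defs
  imports Main "HOL-Library.Sublist"
begin

fun lrun :: "('q \<Rightarrow> 'a \<Rightarrow> 'q option) \<Rightarrow> 'q \<Rightarrow> 'a list \<Rightarrow> 'q option" where
  "lrun \<delta> q [] = Some q"
| "lrun \<delta> q (a # u) = (case \<delta> q a of None \<Rightarrow> None | Some q' \<Rightarrow> lrun \<delta> q' u)"

definition rrun :: "('q \<Rightarrow> 'a \<Rightarrow> 'q option) \<Rightarrow> 'q \<Rightarrow> 'a list \<Rightarrow> 'q option" where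
  "rrun \<delta> q u = lrun \<delta> q (rev u)"

(* semantics of the bimachine B = (L,R,omega,lambda,rho):
   L = (dL, l0), R = (dR, r0); letter i (0-based) is read with left state after take i u
   and right state after reading drop (i+1) u from the right. *)
definition bm_sem ::
  "('l \<Rightarrow> 'a \<Rightarrow> 'l option) \<Rightarrow> 'l \<Rightarrow> ('r \<Rightarrow> 'a \<Rightarrow> 'r option) \<Rightarrow> 'r \<Rightarrow>
   ('l \<Rightarrow> 'a \<Rightarrow> 'r \<Rightarrow> 'a list option) \<Rightarrow> ('r \<Rightarrow> 'a list option) \<Rightarrow> ('l \<Rightarrow> 'a list) \<Rightarrow>
   'a list \<Rightarrow> 'a list option" where
  "bm_sem dL l0 dR r0 \<omega> lam \<rho> u =
     (case lrun dL l0 u of None \<Rightarrow> None | Some ln \<Rightarrow>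
      (case rrun dR r0 u of None \<Rightarrow> None | Some rn \<Rightarrow>
       (case lam rn of None \<Rightarrow> None | Some x \<Rightarrow>
        (case those (map (\<lambda>i. case lrun dL l0 (take i u) of None \<Rightarrow> None | Some l \<Rightarrow>
                               (case rrun dR r0 (drop (Suc i) u) of None \<Rightarrow> None | Some r \<Rightarrow>
                                  \<omega> l (u ! i) r)) [0..<length u]) of
           None \<Rightarrow> None
         | Some ys \<Rightarrow> Some (x @ concat ys @ \<rho> ln)))))"

definition sim_left :: "('q \<Rightarrow> 'a \<Rightarrow> 'q option) \<Rightarrow> 'q \<Rightarrow> 'a list \<Rightarrow> 'a list \<Rightarrow> bool" where
  "sim_left \<delta> q0 u v = (\<forall>p. lrun \<delta> q0 u = Some p \<longleftrightarrow> lrun \<delta> q0 v = Some p)"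

definition sim_right :: "('q \<Rightarrow> 'a \<Rightarrow> 'q option) \<Rightarrow> 'q \<Rightarrow> 'a list \<Rightarrow> 'a list \<Rightarrow> bool" where
  "sim_right \<delta> q0 u v = (\<forall>p. rrun \<delta> q0 u = Some p \<longleftrightarrow> rrun \<delta> q0 v = Some p)"

definition longest_common_suffix :: "'a list \<Rightarrow> 'a list \<Rightarrow> 'a list" where
  "longest_common_suffix u v = rev (longest_common_prefix (rev u) (rev v))"

definition ldist :: "'a list \<Rightarrow> 'a list \<Rightarrow> nat" where
  "ldist u v = length u + length v - 2 * length (longest_common_prefix u v)"

definition rdist :: "'a list \<Rightarrow> 'a list \<Rightarrow> nat" where
  "rdist u v = length u + length v - 2 * length (longest_common_suffix u v)"

(* ~_{R_0} and ~_{L_0} for a partial function f (dom f = {u. f u \<noteq> None});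
   sup < infinity rendered as existence of a uniform bound *)
definition sim_R0 :: "('a list \<Rightarrow> 'a list option) \<Rightarrow> 'a list \<Rightarrow> 'a list \<Rightarrow> bool" where
  "sim_R0 f u v =
    ((\<forall>w. f (w @ u) \<noteq> None \<longleftrightarrow> f (w @ v) \<noteq> None) \<and>
     (\<exists>C. \<forall>w. f (w @ u) \<noteq> None \<longrightarrow> ldist (the (f (w @ u))) (the (f (w @ v))) \<le> C))"

definition sim_L0 :: "('a list \<Rightarrow> 'a list option) \<Rightarrow> 'a list \<Rightarrow> 'a list \<Rightarrow> bool" where
  "sim_L0 f u v =
    ((\<forall>w. f (u @ w) \<noteq> None \<longleftrightarrow> f (v @ w) \<noteq> None) \<and>
     (\<exists>C. \<forall>w. f (u @ w) \<noteq> None \<longrightarrow> rdist (the (f (u @ w))) (the (f (v @ w))) \<le> C))"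

end

theory Submission
  imports Defs
begin

lemma those_map_Some:
  "those (map g xs) = Some ys \<Longrightarrow> (\<forall>x\<in>set xs. g x \<noteq> None) \<and> ys = map (\<lambda>x. the (g x)) xs"
  by (induction xs arbitrary: ys) (auto split: option.splits)

lemma lrun_append:
  "lrun \<delta> q (u @ x) = (case lrun \<delta> q u of None \<Rightarrow> None | Some p \<Rightarrow> lrun \<delta> p x)"
  by (induction u arbitrary: q) (auto split: option.splits)

definition EE where
  "EE dL l0 dR r0 \<omega> x i = the (\<omega> (the (lrun dL l0 (take i x))) (x!i) (the (rrun dR r0 (drop (Suc i) x))))"

lemma sem_eq:
  assumes "bm_sem dL l0 dR r0 \<omega> lam \<rho> x = Some y"
  shows "y = the (lam (the (rrun dR r0 x))) @ concat (map (EE dL l0 dR r0 \<omega> x) [0..<length x])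
             @ \<rho> (the (lrun dL l0 x))"
proof -
  define g where "g = (\<lambda>i. case lrun dL l0 (take i x) of None \<Rightarrow> None | Some l \<Rightarrow>
                               (case rrun dR r0 (drop (Suc i) x) of None \<Rightarrow> None | Some r \<Rightarrow>
                                  \<omega> l (x ! i) r))"
  have gE: "the (g i) = EE dL l0 dR r0 \<omega> x i" if "g i \<noteq> None" for i
    using that unfolding g_def EE_def by (auto split: option.splits)
  from assms obtain ln rn z ys where
    "lrun dL l0 x = Some ln" "rrun dR r0 x = Some rn" "lam rn = Some z"
    "those (map g [0..<length x]) = Some ys" "y = z @ concat ys @ \<rho> ln"
    unfolding bm_sem_def g_def by (auto split: option.splits)
  moreover from those_map_Some[OF this(4)] have "ys = map (EE dL l0 dR r0 \<omega> x) [0..<length x]"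
    using gE by auto
  ultimately show ?thesis by simp
qed

lemma concat_split:
  "concat (map h [0..<m+n]) = concat (map h [0..<m]) @ concat (map (\<lambda>j. h (m+j)) [0..<n])"
proof -
  have "[m..<m+n] = map (\<lambda>j. j + m) [0..<n]" using map_add_upt[of m n] by (simp add: add.commute)
  then show ?thesis using upt_add_eq_append[of 0 m n] by (simp add: comp_def add.commute)
qed

lemma concat_len:
  assumes "\<And>i. length (h i) \<le> M"
  shows "length (concat (map h xs)) \<le> length xs * M"
  using assms by (induction xs) (auto simp: add_mono)

lemma rdist_bound: "rdist (a @ s) (b @ s) \<le> length a + length b"
proof -
  have "prefix (rev s) (longest_common_prefix (rev (a@s)) (rev (b@s)))"
    by (rule longest_common_prefix_max_prefix) auto
  then have "length s \<le> length (longest_common_suffix (a@s) (b@s))"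
    unfolding longest_common_suffix_def using prefix_length_le by fastforce
  then show ?thesis unfolding rdist_def by simp
qed

lemma ldist_bound: "ldist (s @ a) (s @ b) \<le> length a + length b"
proof -
  have "prefix s (longest_common_prefix (s@a) (s@b))"
    by (rule longest_common_prefix_max_prefix) auto
  then have "length s \<le> length (longest_common_prefix (s@a) (s@b))"
    using prefix_length_le by fastforce
  then show ?thesis unfolding ldist_def by simp
qed

theorem mainTheorem11:
  fixes dL :: "'l::finite \<Rightarrow> 'a::finite \<Rightarrow> 'l option" and l0 :: 'l
    and dR :: "'r::finite \<Rightarrow> 'a \<Rightarrow> 'r option" and r0 :: 'r
    and \<omega> :: "'l \<Rightarrow> 'a \<Rightarrow> 'r \<Rightarrow> 'a list option"
    and lam :: "'r \<Rightarrow> 'a list option" and \<rho> :: "'l \<Rightarrow> 'a list"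
    and f :: "'a list \<Rightarrow> 'a list"
  assumes total: "\<forall>u. bm_sem dL l0 dR r0 \<omega> lam \<rho> u = Some (f u)"
  shows "(\<forall>u v. sim_left dL l0 u v \<longrightarrow> sim_L0 (\<lambda>x. Some (f x)) u v) \<and>
         (\<forall>u v. sim_right dR r0 u v \<longrightarrow> sim_R0 (\<lambda>x. Some (f x)) u v)"
proof -
  let ?E = "EE dL l0 dR r0 \<omega>"
  define Mw where "Mw = Max (range (\<lambda>(l,a,r). length (the (\<omega> l a r))))"
  define Ml where "Ml = Max (range (\<lambda>r. length (the (lam r))))"
  define Mr where "Mr = Max (range (\<lambda>l. length (\<rho> l)))"
  have Ew: "length (?E x i) \<le> Mw" for x i
  proof -
    have "length (the (\<omega> (the (lrun dL l0 (take i x))) (x!i) (the (rrun dR r0 (drop (Suc i) x)))))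
       \<le> Mw" unfolding Mw_def
      by (rule Max_ge) (auto intro!: finite_imageI
           image_eqI[where x="(the (lrun dL l0 (take i x)), x!i, the (rrun dR r0 (drop (Suc i) x)))"])
    then show ?thesis unfolding EE_def .
  qed
  have Ml: "length (the (lam r)) \<le> Ml" for r unfolding Ml_def by (rule Max_ge) auto
  have Mr: "length (\<rho> l) \<le> Mr" for l unfolding Mr_def by (rule Max_ge) auto
  have feq: "f x = the (lam (the (rrun dR r0 x))) @ concat (map (?E x) [0..<length x])
             @ \<rho> (the (lrun dL l0 x))" for x
    using sem_eq[OF total[rule_format, of x]] .
  have lSome: "lrun dL l0 x \<noteq> None" for x
    using total[rule_format, of x] unfolding bm_sem_def by (auto split: option.splits)
  have rSome: "rrun dR r0 x \<noteq> None" for x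
    using total[rule_format, of x] unfolding bm_sem_def by (auto split: option.splits)
  have part1: "sim_L0 (\<lambda>x. Some (f x)) u v" if "sim_left dL l0 u v" for u v
  proof -
    have luv: "lrun dL l0 u = lrun dL l0 v"
      using that lSome[of u] lSome[of v] unfolding sim_left_def by fastforce
    have lapp: "lrun dL l0 (u @ x) = lrun dL l0 (v @ x)" for x
      by (simp add: lrun_append luv)
    define S where "S w = concat (map (\<lambda>j. ?E (u@w) (length u + j)) [0..<length w])
                         @ \<rho> (the (lrun dL l0 (u@w)))" for w
    define P where "P x w = the (lam (the (rrun dR r0 (x@w)))) @ concat (map (?E (x@w)) [0..<length x])" for x w
    have Eeq: "?E (u@w) (length u + j) = ?E (v@w) (length v + j)" for w j
      unfolding EE_def by (simp add: lapp nth_append)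
    have fu: "f (u@w) = P u w @ S w" for w
      unfolding feq[of "u@w"] P_def S_def
      using concat_split[of "?E (u@w)" "length u" "length w"] by simp
    have fv: "f (v@w) = P v w @ S w" for w
      unfolding feq[of "v@w"] P_def S_def
      using concat_split[of "?E (v@w)" "length v" "length w"] by (simp add: Eeq lapp)
    have Pb: "length (P x w) \<le> Ml + length x * Mw" for x w
      unfolding P_def using Ml concat_len[of "?E (x@w)" Mw "[0..<length x]"] Ew
      by (simp add: add_mono)
    have "rdist (f (u@w)) (f (v@w)) \<le> Ml + length u * Mw + (Ml + length v * Mw)" for w
      unfolding fu fv using rdist_bound[of "P u w" "S w" "P v w"] Pb[of u w] Pb[of v w] by linarith
    then show ?thesis unfolding sim_L0_def by auto
  qed
  have part2: "sim_R0 (\<lambda>x. Some (f x)) u v" if "sim_right dR r0 u v" for u v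
  proof -
    have ruv: "rrun dR r0 u = rrun dR r0 v"
      using that rSome[of u] rSome[of v] unfolding sim_right_def by fastforce
    have rapp: "rrun dR r0 (x @ u) = rrun dR r0 (x @ v)" for x
      using ruv by (simp add: rrun_def lrun_append)
    define P where "P w = the (lam (the (rrun dR r0 (w@u)))) @ concat (map (?E (w@u)) [0..<length w])" for w
    define S where "S x w = concat (map (\<lambda>j. ?E (w@x) (length w + j)) [0..<length x])
                         @ \<rho> (the (lrun dL l0 (w@x)))" for x w
    have Eeq: "?E (w@u) j = ?E (w@v) j" if "j < length w" for w j
    proof -
      have "drop (Suc j) (w@u) = drop (Suc j) w @ u" "drop (Suc j) (w@v) = drop (Suc j) w @ v"
        using that by simp_all
      then show ?thesis unfolding EE_def using that by (simp add: nth_append rapp)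
    qed
    have fu: "f (w@u) = P w @ S u w" for w
      unfolding feq[of "w@u"] P_def S_def
      using concat_split[of "?E (w@u)" "length w" "length u"] by simp
    have fv: "f (w@v) = P w @ S v w" for w
    proof -
      have mm: "map (?E (w@v)) [0..<length w] = map (?E (w@u)) [0..<length w]"
        using Eeq by simp
      show ?thesis
        unfolding feq[of "w@v"] P_def S_def
        using concat_split[of "?E (w@v)" "length w" "length v"] by (simp only: mm rapp length_append append_assoc)
    qed
    have Sb: "length (S x w) \<le> length x * Mw + Mr" for x w
      unfolding S_def using Mr concat_len[of "\<lambda>j. ?E (w@x) (length w + j)" Mw "[0..<length x]"] Ew
      by (simp add: add_mono)
    have "ldist (f (w@u)) (f (w@v)) \<le> length u * Mw + Mr + (length v * Mw + Mr)" for w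
      unfolding fu fv using ldist_bound[of "P w" "S u w" "S v w"] Sb[of u w] Sb[of v w] by linarith
    then show ?thesis unfolding sim_R0_def by auto
  qed
  show ?thesis using part1 part2 by blast
qed

end
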